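(* Let $p,q$ be relatively prime positive integers, $k\ge1$ an integer and $\mu\in\mathbb{C}$. Let $\mathcal{F}_1$ be the real one-dimensional singular foliation on a disc $\{y\in\mathbb{C}:|y|<r\}$ defined by the real $1$-form $$\omega_1=\mathrm{Re}\left\{\left(\frac{\mu q}{y}+\frac{q}{y^{qk+1}}\right)\mathrm{d}y\right\}$$ (equivalently, by the real flow of the vector field $X=i\,\frac{y^{qk+1}}{1+\mu y^{qk}}\frac{\partial}{\partial y}$). Then, if $r>0$ is small enough, there exists a $C^\infty$ submersion $f:\{0<|y|<r\}\to\mathbb{R}$ such that (1) $f$ is a first integral of $\mathcal{F}_1$, and (2) $f(y)=g(y^{qk})$ for some $C^\infty$ submersion $g$.
   Context: $\mathcal{F}_1$ is the restriction to the section $\{(1,y)\}$ of the real analytic foliation defined by $\mathrm{Re}(\tau)$, where $\tau=(\mu-1)p\frac{\mathrm{d}x}{x}+\mu q\frac{\mathrm{d}y}{y}-\mathrm{d}\left(\frac{1}{k(x^py^q)^k}\right)$. A first integral of a foliation is a function constant along its leaves. *)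

theory Defs
  imports "HOL-Analysis.Analysis"
begin

fun iter_dderiv :: "'a::real_normed_vector list \<Rightarrow> ('a \<Rightarrow> 'b::real_normed_vector) \<Rightarrow> 'a \<Rightarrow> 'b" where
  "iter_dderiv [] f = f"
| "iter_dderiv (v # vs) f = (\<lambda>x. frechet_derivative (iter_dderiv vs f) (at x) v)"

definition smooth_on :: "'a::real_normed_vector set \<Rightarrow> ('a \<Rightarrow> 'b::real_normed_vector) \<Rightarrow> bool" where
  "smooth_on S f \<longleftrightarrow> (\<forall>vs. \<forall>x\<in>S. iter_dderiv vs f differentiable (at x))"

definition submersion_on :: "'a::real_normed_vector set \<Rightarrow> ('a \<Rightarrow> real) \<Rightarrow> bool" where
  "submersion_on S f \<longleftrightarrow> smooth_on S f \<and> (\<forall>x\<in>S. surj (frechet_derivative f (at x)))"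

text \<open>A real 1-form on (an open subset of) C = R^2 is a map point -> tangent vector -> real.\<close>
definition integral_curve :: "(complex \<Rightarrow> complex \<Rightarrow> real) \<Rightarrow> complex set \<Rightarrow> (real \<Rightarrow> complex) \<Rightarrow> real \<Rightarrow> real \<Rightarrow> bool" where
  "integral_curve \<omega> S \<gamma> a b \<longleftrightarrow> a \<le> b \<and>
     (\<forall>t\<in>{a..b}. \<gamma> t \<in> S \<and>
        (\<exists>d. (\<gamma> has_vector_derivative d) (at t within {a..b}) \<and> \<omega> (\<gamma> t) d = 0))"

definition first_integral :: "(complex \<Rightarrow> complex \<Rightarrow> real) \<Rightarrow> complex set \<Rightarrow> (complex \<Rightarrow> real) \<Rightarrow> bool" where
  "first_integral \<omega> S f \<longleftrightarrow> (\<forall>\<gamma> a b. integral_curve \<omega> S \<gamma> a b \<longrightarrow> f (\<gamma> a) = f (\<gamma> b))"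

definition omega1 :: "complex \<Rightarrow> nat \<Rightarrow> nat \<Rightarrow> complex \<Rightarrow> complex \<Rightarrow> real" where
  "omega1 \<mu> q k y v = Re ((\<mu> * of_nat q / y + of_nat q / y ^ (q * k + 1)) * v)"

end

theory Submission
  imports Defs "HOL-Computational_Algebra.Polynomial" "HOL-Complex_Analysis.Complex_Analysis" "HOL-Real_Asymp.Real_Asymp"
begin


fun Pn :: "nat \<Rightarrow> real poly" where
  "Pn 0 = 1"
| "Pn (Suc n) = [:0,0,1:] * (Pn n - pderiv (Pn n))"

definition En :: "nat \<Rightarrow> real \<Rightarrow> real" where
  "En n t = (if 0 < t then poly (Pn n) (inverse t) * exp (- inverse t) else 0)"

lemma poly_exp_tendsto: "((\<lambda>s. poly P s * exp (- s)) \<longlongrightarrow> (0::real)) at_top"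
proof -
  have "((\<lambda>s. \<Sum>i\<le>degree P. coeff P i * (s ^ i / exp s)) \<longlongrightarrow> (\<Sum>i\<le>degree P. coeff P i * 0)) at_top"
    by (intro tendsto_sum tendsto_mult tendsto_const tendsto_power_div_exp_0)
  moreover have "(\<lambda>s. poly P s * exp (- s)) = (\<lambda>s. \<Sum>i\<le>degree P. coeff P i * (s ^ i / exp s))"
    by (auto simp: poly_altdef sum_divide_distrib exp_minus field_simps)
  ultimately show ?thesis by simp
qed

lemma En_right0: "((\<lambda>y. En n y / y) \<longlongrightarrow> 0) (at_right 0)"
proof -
  have "(((\<lambda>s. poly ([:0,1:] * Pn n) s * exp (- s)) \<circ> inverse) \<longlongrightarrow> 0) (at_right (0::real))"
    using filterlim_compose[OF poly_exp_tendsto[of "[:0,1:] * Pn n"] filterlim_inverse_at_top_right] by (simp add: o_def mult.assoc)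
  moreover have "eventually (\<lambda>y. ((\<lambda>s. poly ([:0,1:] * Pn n) s * exp (- s)) \<circ> inverse) y = En n y / y) (at_right (0::real))"
    by (rule eventually_mono[OF eventually_at_right_less]) (auto simp: En_def divide_inverse)
  ultimately show ?thesis by (rule Lim_transform_eventually)
qed

lemma En_deriv: "(En n has_real_derivative En (Suc n) t) (at t)"
proof (cases "t = 0")
  case True
  have L: "((\<lambda>y. (En n y - En n 0) / (y - 0)) \<longlongrightarrow> 0) (at_left (0::real))"
  proof -
    have "eventually (\<lambda>x. x \<in> {-1<..<0}) (at_left (0::real))"
      by (rule eventually_at_left_real) simp
    then have "eventually (\<lambda>y. 0 = (En n y - En n 0) / (y - 0)) (at_left (0::real))"
      by eventually_elim (auto simp: En_def)
    then show ?thesis by (rule Lim_transform_eventually[OF tendsto_const])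
  qed
  have R: "((\<lambda>y. (En n y - En n 0) / (y - 0)) \<longlongrightarrow> 0) (at_right (0::real))"
    using En_right0[of n] by (simp add: En_def)
  have "((\<lambda>y. (En n y - En n 0) / (y - 0)) \<longlongrightarrow> 0) (at (0::real))"
    using L R filterlim_at_split by blast
  then show ?thesis using True by (simp add: has_field_derivative_iff En_def)
next
  case False
  show ?thesis
  proof (cases "t > 0")
    case True
    let ?P = "Pn n"
    have "((\<lambda>x. poly ?P (inverse x) * exp (- inverse x)) has_real_derivative
        poly (pderiv ?P) (inverse t) * (- (inverse t ^ 2)) * exp (- inverse t) +
        poly ?P (inverse t) * (exp (- inverse t) * (inverse t ^ 2))) (at t)"
      using True
      by (auto intro!: derivative_eq_intros DERIV_chain2[OF poly_DERIV] simp: power2_eq_square)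
    moreover have "poly (pderiv ?P) (inverse t) * (- (inverse t ^ 2)) * exp (- inverse t) +
        poly ?P (inverse t) * (exp (- inverse t) * (inverse t ^ 2)) = En (Suc n) t"
      using True by (simp add: En_def algebra_simps power2_eq_square)
    ultimately have "((\<lambda>x. poly ?P (inverse x) * exp (- inverse x)) has_real_derivative En (Suc n) t) (at t)"
      by simp
    then show ?thesis
      by (rule has_field_derivative_transform_within_open[where S="{0<..}"]) (use True in \<open>auto simp: En_def\<close>)
  next
    case False2: False
    then have t: "t < 0" using False by simp
    have "((\<lambda>x. 0) has_real_derivative En (Suc n) t) (at t)" using t by (simp add: En_def)
    then show ?thesis
      by (rule has_field_derivative_transform_within_open[where S="{..<0}"]) (use t in \<open>auto simp: En_def\<close>)
  qed
qed




lemma En_cont: "continuous_on A (En n)"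
  using En_deriv by (meson DERIV_isCont continuous_at_imp_continuous_on)

lemma En0_pos: "0 < t \<Longrightarrow> 0 < En 0 t" by (simp add: En_def)
lemma En0_nonneg: "0 \<le> En 0 t" by (simp add: En_def)
lemma En_zero: "t \<le> 0 \<Longrightarrow> En n t = 0" by (simp add: En_def)

definition den :: "real \<Rightarrow> real" where "den t = En 0 t + En 0 (1 - t)"

lemma den_pos: "0 < den t"
proof (cases "t > 0")
  case True then show ?thesis using En0_pos[of t] En0_nonneg[of "1-t"] by (simp add: den_def)
next
  case False then show ?thesis using En0_pos[of "1-t"] En0_nonneg[of t] by (simp add: den_def)
qed

definition sig :: "real \<Rightarrow> real" where "sig t = En 0 t / den t"
definition sigd :: "real \<Rightarrow> real" where
  "sigd t = (En 1 t * En 0 (1 - t) + En 0 t * En 1 (1 - t)) / (den t)\<^sup>2"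

lemma sig_deriv: "(sig has_real_derivative sigd t) (at t)"
proof -
  have d: "(den has_real_derivative (En 1 t - En 1 (1 - t))) (at t)"
    unfolding den_def
    by (auto intro!: derivative_eq_intros DERIV_chain2[OF En_deriv[of 0]] simp: One_nat_def)
  have "((\<lambda>t. En 0 t / den t) has_real_derivative
      (En 1 t * den t - En 0 t * (En 1 t - En 1 (1 - t))) / (den t * den t)) (at t)"
    by (rule DERIV_divide[OF En_deriv[of 0, simplified One_nat_def[symmetric]] d]) (use den_pos[of t] in simp)
  moreover have "(En 1 t * den t - En 0 t * (En 1 t - En 1 (1 - t))) / (den t * den t) = sigd t"
    by (simp add: sigd_def den_def power2_eq_square algebra_simps)
  ultimately show ?thesis by (simp add: sig_def[abs_def])
qed

lemma sig_0: "t \<le> 0 \<Longrightarrow> sig t = 0" by (simp add: sig_def En_zero)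
lemma sig_1: "1 \<le> t \<Longrightarrow> sig t = 1"
  using den_pos[of t] by (simp add: sig_def den_def En_zero)

lemma En_isCont: "isCont (En n) t" using En_deriv by (rule DERIV_isCont)

lemma En_isCont1: "isCont (\<lambda>t. En n (1 - t)) t"
  by (rule isCont_o2[OF _ En_isCont]) (intro continuous_intros)

lemma sigd_cont: "continuous_on A sigd"
proof -
  have "isCont sigd t" for t
    using den_pos[of t] unfolding sigd_def den_def
    by (intro continuous_intros En_isCont En_isCont1) auto
  then show ?thesis by (simp add: continuous_at_imp_continuous_on)
qed

lemma sigd_bounded: "\<exists>B>0. \<forall>t. \<bar>sigd t\<bar> \<le> B"
proof -
  have "compact (sigd ` {0..1})"
    by (intro compact_continuous_image sigd_cont compact_Icc)
  then obtain B where B: "B > 0" "\<And>x. x \<in> sigd ` {0..1} \<Longrightarrow> norm x \<le> B"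
    using compact_imp_bounded bounded_pos by metis
  have "\<bar>sigd t\<bar> \<le> B" for t
  proof (cases "t \<in> {0..1}")
    case True then show ?thesis using B by auto
  next
    case False
    then have "t < 0 \<or> t > 1" by auto
    then have "sigd t = 0" by (auto simp: sigd_def En_zero)
    then show ?thesis using B by simp
  qed
  then show ?thesis using B by blast
qed

definition Bd :: real where "Bd = (SOME B. B > 0 \<and> (\<forall>t. \<bar>sigd t\<bar> \<le> B))"

lemma Bd: "Bd > 0" "\<bar>sigd t\<bar> \<le> Bd"
  using someI_ex[OF sigd_bounded] unfolding Bd_def by auto

definition Mb :: "real \<Rightarrow> real" where "Mb \<beta> = \<bar>\<beta>\<bar> * Bd + 1"

definition Phi :: "real \<Rightarrow> real \<Rightarrow> real" where
  "Phi \<beta> s = s - \<beta> * sig ((s + Mb \<beta>) / (2 * Mb \<beta>))"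
definition Phid :: "real \<Rightarrow> real \<Rightarrow> real" where
  "Phid \<beta> s = 1 - \<beta> / (2 * Mb \<beta>) * sigd ((s + Mb \<beta>) / (2 * Mb \<beta>))"

lemma Mb_pos: "Mb \<beta> > 0" using Bd(1) by (simp add: Mb_def add_nonneg_pos)

lemma Phi_deriv: "(Phi \<beta> has_real_derivative Phid \<beta> s) (at s)"
proof -
  have "((\<lambda>s. s - \<beta> * sig ((s + Mb \<beta>) / (2 * Mb \<beta>))) has_real_derivative
     1 - \<beta> * (sigd ((s + Mb \<beta>) / (2 * Mb \<beta>)) * (1 / (2 * Mb \<beta>)))) (at s)"
  proof -
    have "((\<lambda>x. (x + Mb \<beta>) / (2 * Mb \<beta>)) has_real_derivative 1 / (2 * Mb \<beta>)) (at s)"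
      using Mb_pos[of \<beta>] by (auto intro!: derivative_eq_intros)
    from DERIV_chain2[OF sig_deriv this] show ?thesis
      using Mb_pos[of \<beta>] by (auto intro!: derivative_eq_intros)
  qed
  then show ?thesis by (simp add: Phi_def[abs_def] Phid_def)
qed

lemma Phid_pos: "Phid \<beta> s > 0"
proof -
  let ?t = "(s + Mb \<beta>) / (2 * Mb \<beta>)"
  have M: "Mb \<beta> > 0" by (rule Mb_pos)
  have "\<bar>\<beta> / (2 * Mb \<beta>) * sigd ?t\<bar> = \<bar>\<beta>\<bar> * \<bar>sigd ?t\<bar> / (2 * Mb \<beta>)"
    using M by (simp add: abs_mult)
  also have "\<dots> \<le> \<bar>\<beta>\<bar> * Bd / (2 * Mb \<beta>)"
    using M Bd(2)[of ?t] by (intro divide_right_mono mult_left_mono) auto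
  also have "\<dots> < 1"
    using M Bd(1) by (simp add: Mb_def field_simps)
  finally show ?thesis unfolding Phid_def by linarith
qed

lemma Phi_low: "s \<le> - Mb \<beta> \<Longrightarrow> Phi \<beta> s = s"
proof -
  assume a: "s \<le> - Mb \<beta>"
  have "(s + Mb \<beta>) / (2 * Mb \<beta>) \<le> 0"
    using a Mb_pos[of \<beta>] by (intro divide_nonpos_pos) auto
  then show ?thesis by (simp add: Phi_def sig_0)
qed

lemma Phi_high: "Mb \<beta> \<le> s \<Longrightarrow> Phi \<beta> s = s - \<beta>"
proof -
  assume a: "Mb \<beta> \<le> s"
  have "1 \<le> (s + Mb \<beta>) / (2 * Mb \<beta>)"
    using a Mb_pos[of \<beta>] by (simp add: field_simps)
  then show ?thesis by (simp add: Phi_def sig_1)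
qed




inductive_set alg :: "complex set \<Rightarrow> (complex \<Rightarrow> real) set" for S where
  re: "K holomorphic_on S \<Longrightarrow> (\<lambda>x. Re (K x)) \<in> alg S"
| en: "K holomorphic_on S \<Longrightarrow> (\<lambda>x. En n (Re (K x))) \<in> alg S"
| iv: "K holomorphic_on S \<Longrightarrow> (\<lambda>x. inverse (En 0 (Re (K x)) + En 0 (1 - Re (K x)))) \<in> alg S"
| add: "f \<in> alg S \<Longrightarrow> g \<in> alg S \<Longrightarrow> (\<lambda>x. f x + g x) \<in> alg S"
| mult: "f \<in> alg S \<Longrightarrow> g \<in> alg S \<Longrightarrow> (\<lambda>x. f x * g x) \<in> alg S"

lemma alg_const: "(\<lambda>x. c) \<in> alg S"
  using alg.re[of "\<lambda>x. complex_of_real c" S] by simp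

lemma Re_holo_deriv:
  assumes "K holomorphic_on S" "open S" "x \<in> S"
  shows "((\<lambda>x. Re (K x)) has_derivative (\<lambda>v. Re (deriv K x * v))) (at x)"
proof -
  have "(K has_field_derivative deriv K x) (at x)"
    using holomorphic_derivI[OF assms] .
  then have "(K has_derivative (\<lambda>v. deriv K x * v)) (at x)"
    by (simp add: has_field_derivative_def)
  from bounded_linear.has_derivative[OF bounded_linear_Re this] show ?thesis .
qed

lemma alg_re_deriv:
  assumes "K holomorphic_on S" "open S"
  shows "(\<lambda>x. Re (deriv K x * v)) \<in> alg S"
  by (rule alg.re) (use assms in \<open>auto intro!: holomorphic_intros\<close>)

lemma alg_deriv:
  assumes "h \<in> alg S" "open S"
  shows "\<exists>D. (\<forall>x\<in>S. (h has_derivative D x) (at x)) \<and> (\<forall>v. (\<lambda>x. D x v) \<in> alg S)"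
  using assms(1)
proof induction
  case (re K)
  show ?case
    by (rule exI[of _ "\<lambda>x v. Re (deriv K x * v)"])
       (use re assms(2) Re_holo_deriv alg_re_deriv in blast)
next
  case (en K n)
  have "(\<lambda>x. Re (deriv K x * v) * En (Suc n) (Re (K x))) \<in> alg S" for v
    by (intro alg.mult alg_re_deriv alg.en en assms(2))
  moreover have "((\<lambda>x. En n (Re (K x))) has_derivative (\<lambda>v. Re (deriv K x * v) * En (Suc n) (Re (K x)))) (at x)"
    if "x \<in> S" for x
    by (rule DERIV_compose_FDERIV[OF En_deriv Re_holo_deriv[OF en assms(2) that]])
  ultimately show ?case
    by (intro exI[of _ "\<lambda>x v. Re (deriv K x * v) * En (Suc n) (Re (K x))"]) auto
next
  case (iv K)
  define F where "F x = En 0 (Re (K x)) + En 0 (1 - Re (K x))" for x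
  have Fpos: "F x > 0" for x using den_pos[of "Re (K x)"] by (simp add: F_def den_def)
  have e1: "(\<lambda>x. En 1 (1 - Re (K x))) = (\<lambda>x. En 1 (Re ((\<lambda>x. 1 - K x) x)))" by simp
  have h1: "(\<lambda>x. 1 - K x) holomorphic_on S" using iv by (intro holomorphic_intros)
  let ?D = "\<lambda>x v. (- 1) * (inverse (F x) * inverse (F x)) *
       (Re (deriv K x * v) * En 1 (Re (K x)) + (- 1) * Re (deriv K x * v) * En 1 (1 - Re (K x)))"
  have "(\<lambda>x. ?D x v) \<in> alg S" for v
    unfolding F_def
    by (intro alg.mult alg.add alg_const alg_re_deriv alg.en alg.iv iv assms(2))
       (subst e1, intro alg.en h1)
  moreover have "((\<lambda>x. inverse (F x)) has_derivative ?D x) (at x)" if "x \<in> S" for x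
  proof -
    have dF: "(F has_derivative (\<lambda>v. Re (deriv K x * v) * En 1 (Re (K x)) + (- 1) * Re (deriv K x * v) * En 1 (1 - Re (K x)))) (at x)"
    proof -
      have a: "((\<lambda>x. En 0 (Re (K x))) has_derivative (\<lambda>v. Re (deriv K x * v) * En 1 (Re (K x)))) (at x)"
        using DERIV_compose_FDERIV[OF En_deriv[of 0] Re_holo_deriv[OF iv assms(2) that]] by simp
      have "((\<lambda>x. 1 - Re (K x)) has_derivative (\<lambda>v. 0 - Re (deriv K x * v))) (at x)"
        by (intro has_derivative_diff has_derivative_const Re_holo_deriv[OF iv assms(2) that])
      from DERIV_compose_FDERIV[OF En_deriv[of 0] this]
      have b: "((\<lambda>x. En 0 (1 - Re (K x))) has_derivative (\<lambda>v. (- 1) * Re (deriv K x * v) * En 1 (1 - Re (K x)))) (at x)"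
        by simp
      show ?thesis unfolding F_def[abs_def] by (rule has_derivative_add[OF a b])
    qed
    have "(inverse has_real_derivative - (inverse (F x) ^ Suc (Suc 0))) (at (F x))"
      by (rule DERIV_inverse) (use Fpos[of x] in simp)
    from DERIV_compose_FDERIV[OF this dF] show ?thesis by (simp add: algebra_simps power2_eq_square)
  qed
  ultimately show ?case unfolding F_def by (intro exI[of _ ?D]) (auto simp: F_def)
next
  case (add f g)
  then obtain Df Dg where "\<forall>x\<in>S. (f has_derivative Df x) (at x)" "\<forall>v. (\<lambda>x. Df x v) \<in> alg S"
    "\<forall>x\<in>S. (g has_derivative Dg x) (at x)" "\<forall>v. (\<lambda>x. Dg x v) \<in> alg S" by blast
  then show ?case
    by (intro exI[of _ "\<lambda>x v. Df x v + Dg x v"]) (auto intro!: has_derivative_add alg.add)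
next
  case (mult f g)
  then obtain Df Dg where d: "\<forall>x\<in>S. (f has_derivative Df x) (at x)" "\<forall>v. (\<lambda>x. Df x v) \<in> alg S"
    "\<forall>x\<in>S. (g has_derivative Dg x) (at x)" "\<forall>v. (\<lambda>x. Dg x v) \<in> alg S" by blast
  show ?case
    by (intro exI[of _ "\<lambda>x v. f x * Dg x v + Df x v * g x"])
       (use d mult in \<open>auto intro!: has_derivative_mult alg.add alg.mult\<close>)
qed

lemma alg_smooth:
  assumes "open S" "h \<in> alg S"
  shows "smooth_on S h"
proof -
  have ex: "\<exists>k\<in>alg S. \<forall>x\<in>S. iter_dderiv vs h x = k x" for vs
  proof (induction vs)
    case Nil then show ?case using assms by auto
  next
    case (Cons v vs)
    then obtain k where k: "k \<in> alg S" "\<forall>x\<in>S. iter_dderiv vs h x = k x" by blast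
    obtain D where D: "\<forall>x\<in>S. (k has_derivative D x) (at x)" "\<forall>v. (\<lambda>x. D x v) \<in> alg S"
      using alg_deriv[OF k(1) assms(1)] by blast
    have "iter_dderiv (v # vs) h x = D x v" if "x \<in> S" for x
    proof -
      have "(iter_dderiv vs h has_derivative D x) (at x)"
        by (rule has_derivative_transform_within_open[OF D(1)[rule_format, OF that] assms(1) that])
           (use k(2) in auto)
      then show ?thesis by (simp add: frechet_derivative_at[symmetric])
    qed
    then show ?case using D(2) by (intro bexI[of _ "\<lambda>x. D x v"]) auto
  qed
  moreover have "iter_dderiv vs h differentiable (at x)" if "x \<in> S" for vs x
  proof -
    obtain k where k: "k \<in> alg S" "\<forall>x\<in>S. iter_dderiv vs h x = k x"
      using ex by blast
    obtain D where D: "\<forall>x\<in>S. (k has_derivative D x) (at x)"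
      using alg_deriv[OF k(1) assms(1)] by blast
    have "(iter_dderiv vs h has_derivative D x) (at x)"
      by (rule has_derivative_transform_within_open[OF D[rule_format, OF that] assms(1) that])
         (use k(2) in auto)
    then show ?thesis by (auto simp: differentiable_def)
  qed
  ultimately show ?thesis by (auto simp: smooth_on_def)
qed




definition pc :: "real \<Rightarrow> bool \<Rightarrow> (complex \<Rightarrow> complex) \<Rightarrow> complex \<Rightarrow> real" where
  "pc \<beta> j K z = (if j then Phi \<beta> (Re (K z)) else Re (K z))"
definition pcd :: "real \<Rightarrow> bool \<Rightarrow> real \<Rightarrow> real" where
  "pcd \<beta> j s = (if j then Phid \<beta> s else 1)"

lemma Re_mult_ofr: "Re (complex_of_real r * z) = r * Re z" by simp

lemma pcd_pos: "pcd \<beta> j s > 0" by (simp add: pcd_def Phid_pos)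

lemma pc_alg:
  assumes "K holomorphic_on S"
  shows "pc \<beta> j K \<in> alg S"
proof (cases j)
  case False
  then show ?thesis using alg.re[OF assms] by (simp add: pc_def[abs_def])
next
  case True
  define M where "M = Mb \<beta>"
  have M: "M > 0" using Mb_pos by (simp add: M_def)
  define K1 where "K1 z = (K z + of_real M) / of_real (2 * M)" for z
  have h1: "K1 holomorphic_on S" unfolding K1_def[abs_def] using assms M by (intro holomorphic_intros) auto
  have r1: "Re (K1 z) = (Re (K z) + M) / (2 * M)" for z by (simp add: K1_def Re_divide_of_real)
  have "(\<lambda>z. Re (K z) + (- \<beta>) * En 0 (Re (K1 z)) * inverse (En 0 (Re (K1 z)) + En 0 (1 - Re (K1 z)))) \<in> alg S"
    by (intro alg.add alg.mult alg.re alg_const alg.en alg.iv assms h1)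
  moreover have "(\<lambda>z. Re (K z) + (- \<beta>) * En 0 (Re (K1 z)) * inverse (En 0 (Re (K1 z)) + En 0 (1 - Re (K1 z)))) = pc \<beta> j K"
  proof (rule ext)
    fix z
    have "pc \<beta> j K z = Re (K z) - \<beta> * (En 0 (Re (K1 z)) * inverse (En 0 (Re (K1 z)) + En 0 (1 - Re (K1 z))))"
      by (simp only: pc_def True if_True Phi_def sig_def den_def r1 M_def divide_inverse)
    then show "Re (K z) + (- \<beta>) * En 0 (Re (K1 z)) * inverse (En 0 (Re (K1 z)) + En 0 (1 - Re (K1 z))) = pc \<beta> j K z"
      by (simp only: mult.assoc mult_minus_left diff_conv_add_uminus)
  qed
  ultimately show ?thesis by simp
qed

lemma pc_smooth: "open S \<Longrightarrow> K holomorphic_on S \<Longrightarrow> smooth_on S (pc \<beta> j K)"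
  by (rule alg_smooth) (auto intro: pc_alg)

lemma pc_deriv:
  assumes "K holomorphic_on U" "open U" "z \<in> U"
  shows "(pc \<beta> j K has_derivative (\<lambda>v. Re (deriv K z * v) * pcd \<beta> j (Re (K z)))) (at z)"
proof (cases j)
  case True
  show ?thesis using DERIV_compose_FDERIV[OF Phi_deriv Re_holo_deriv[OF assms]] True
    by (simp add: pc_def[abs_def] pcd_def)
next
  case False
  show ?thesis using Re_holo_deriv[OF assms] False
    by (simp add: pc_def[abs_def] pcd_def)
qed

lemma frechet_local:
  assumes "open U" "z \<in> U" "\<forall>x\<in>U. g x = h x"
  shows "frechet_derivative g (at z) = frechet_derivative h (at z)"
proof -
  have "(g has_derivative D) (at z) \<longleftrightarrow> (h has_derivative D) (at z)" for D
    using has_derivative_transform_within_open[OF _ assms(1,2), of g D UNIV h]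
          has_derivative_transform_within_open[OF _ assms(1,2), of h D UNIV g] assms(3)
    by auto
  then show ?thesis unfolding frechet_derivative_def by simp
qed

lemma iter_local:
  assumes "open U" "\<forall>x\<in>U. g x = h x"
  shows "\<forall>z\<in>U. iter_dderiv vs g z = iter_dderiv vs h z"
proof (induction vs)
  case Nil then show ?case using assms by simp
next
  case (Cons v vs)
  show ?case
  proof
    fix z assume z: "z \<in> U"
    have "frechet_derivative (iter_dderiv vs g) (at z) = frechet_derivative (iter_dderiv vs h) (at z)"
      by (rule frechet_local[OF assms(1) z Cons.IH])
    then show "iter_dderiv (v # vs) g z = iter_dderiv (v # vs) h z" by simp
  qed
qed

lemma smooth_local:
  assumes "\<And>x. x \<in> S \<Longrightarrow> \<exists>U h. open U \<and> x \<in> U \<and> smooth_on U h \<and> (\<forall>z\<in>U. g z = h z)"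
  shows "smooth_on S g"
  unfolding smooth_on_def
proof (intro allI ballI)
  fix vs x assume x: "x \<in> S"
  obtain U h where U: "open U" "x \<in> U" "smooth_on U h" "\<forall>z\<in>U. g z = h z" using assms[OF x] by blast
  have "iter_dderiv vs h differentiable (at x)" using U unfolding smooth_on_def by blast
  then obtain D where "(iter_dderiv vs h has_derivative D) (at x)" by (auto simp: differentiable_def)
  then have "(iter_dderiv vs g has_derivative D) (at x)"
    by (rule has_derivative_transform_within_open[OF _ U(1,2)]) (use iter_local[OF U(1,4)] in auto)
  then show "iter_dderiv vs g differentiable (at x)" by (auto simp: differentiable_def)
qed

lemma locrep_submersion:
  assumes "\<And>x. x \<in> S \<Longrightarrow> \<exists>U K j. open U \<and> x \<in> U \<and> K holomorphic_on U \<and> deriv K x \<noteq> 0 \<and> (\<forall>z\<in>U. g z = pc \<beta> j K z)"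
  shows "submersion_on S g"
  unfolding submersion_on_def
proof (intro conjI ballI)
  show "smooth_on S g"
  proof (rule smooth_local)
    fix x assume "x \<in> S"
    then obtain U K j where U: "open U" "x \<in> U" "K holomorphic_on U" "\<forall>z\<in>U. g z = pc \<beta> j K z"
      using assms by blast
    show "\<exists>U h. open U \<and> x \<in> U \<and> smooth_on U h \<and> (\<forall>z\<in>U. g z = h z)"
      using U pc_smooth[OF U(1,3)] by blast
  qed
next
  fix x assume x: "x \<in> S"
  obtain U K j where U: "open U" "x \<in> U" "K holomorphic_on U" "deriv K x \<noteq> 0" "\<forall>z\<in>U. g z = pc \<beta> j K z"
    using assms[OF x] by blast
  define c where "c = pcd \<beta> j (Re (K x))"
  have c: "c > 0" using pcd_pos by (simp add: c_def)
  have "(g has_derivative (\<lambda>v. Re (deriv K x * v) * c)) (at x)"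
    unfolding c_def
    by (rule has_derivative_transform_within_open[OF pc_deriv[OF U(3,1,2)] U(1,2)]) (use U(5) in auto)
  then have fd: "frechet_derivative g (at x) = (\<lambda>v. Re (deriv K x * v) * c)"
    by (simp add: frechet_derivative_at[symmetric])
  show "surj (frechet_derivative g (at x))"
    unfolding fd surj_def
  proof
    fix t :: real
    have "Re (deriv K x * (of_real (t / c) / deriv K x)) * c = t" using U(4) c by simp
    then show "\<exists>v. t = Re (deriv K x * v) * c" by metis
  qed
qed

lemma locrep_first_integral:
  assumes "\<And>x. x \<in> S \<Longrightarrow> \<exists>U K j c. open U \<and> x \<in> U \<and> K holomorphic_on U \<and>
      deriv K x = of_real c * (\<mu> * of_nat q / x + of_nat q / x ^ (q * k + 1)) \<and> (\<forall>z\<in>U. f z = pc \<beta> j K z)"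
  shows "first_integral (omega1 \<mu> q k) S f"
  unfolding first_integral_def integral_curve_def
proof (intro allI impI)
  fix \<gamma> :: "real \<Rightarrow> complex" and a b
  assume A: "a \<le> b \<and> (\<forall>t\<in>{a..b}. \<gamma> t \<in> S \<and> (\<exists>d. (\<gamma> has_vector_derivative d) (at t within {a..b}) \<and> omega1 \<mu> q k (\<gamma> t) d = 0))"
  have "((f \<circ> \<gamma>) has_derivative (\<lambda>h. 0)) (at t within {a..b})" if t: "t \<in> {a..b}" for t
  proof -
    obtain d where d: "(\<gamma> has_vector_derivative d) (at t within {a..b})" "omega1 \<mu> q k (\<gamma> t) d = 0"
      and gS: "\<gamma> t \<in> S" using A t by blast
    obtain U K j c where U: "open U" "\<gamma> t \<in> U" "K holomorphic_on U"
      "deriv K (\<gamma> t) = of_real c * (\<mu> * of_nat q / \<gamma> t + of_nat q / \<gamma> t ^ (q * k + 1))"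
      "\<forall>z\<in>U. f z = pc \<beta> j K z"
      using assms[OF gS] by blast
    have fd: "(f has_derivative (\<lambda>v. Re (deriv K (\<gamma> t) * v) * pcd \<beta> j (Re (K (\<gamma> t))))) (at (\<gamma> t))"
      by (rule has_derivative_transform_within_open[OF pc_deriv[OF U(3,1,2)] U(1,2)]) (use U(5) in auto)
    have gd: "(\<gamma> has_derivative (\<lambda>h. h *\<^sub>R d)) (at t within {a..b})"
      using d(1) by (simp add: has_vector_derivative_def)
    have "((f \<circ> \<gamma>) has_derivative ((\<lambda>v. Re (deriv K (\<gamma> t) * v) * pcd \<beta> j (Re (K (\<gamma> t)))) \<circ> (\<lambda>h. h *\<^sub>R d))) (at t within {a..b})"
      by (rule diff_chain_within[OF gd has_derivative_at_withinI[OF fd]])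
    moreover have "((\<lambda>v. Re (deriv K (\<gamma> t) * v) * pcd \<beta> j (Re (K (\<gamma> t)))) \<circ> (\<lambda>h. h *\<^sub>R d)) = (\<lambda>h. 0)"
    proof
      fix h :: real
      have e: "deriv K (\<gamma> t) * (h *\<^sub>R d) = of_real (h * c) * ((\<mu> * of_nat q / \<gamma> t + of_nat q / \<gamma> t ^ (q * k + 1)) * d)"
        unfolding U(4) by (simp add: scaleR_conv_of_real)
      have "Re (deriv K (\<gamma> t) * (h *\<^sub>R d)) = h * c * omega1 \<mu> q k (\<gamma> t) d"
        unfolding e omega1_def by (simp only: Re_mult_ofr)
      then show "((\<lambda>v. Re (deriv K (\<gamma> t) * v) * pcd \<beta> j (Re (K (\<gamma> t)))) \<circ> (\<lambda>h. h *\<^sub>R d)) h = 0"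
        using d(2) by simp
    qed
    ultimately show ?thesis by simp
  qed
  then obtain C where "\<forall>t\<in>{a..b}. (f \<circ> \<gamma>) t = C"
    using has_derivative_zero_constant[of "{a..b}" "f \<circ> \<gamma>"] by auto
  then show "f (\<gamma> a) = f (\<gamma> b)" using A by auto
qed




definition H1 :: "complex \<Rightarrow> complex \<Rightarrow> complex" where "H1 \<mu> w = \<mu> * Ln w - 1 / w"
definition H2 :: "complex \<Rightarrow> complex \<Rightarrow> complex" where "H2 \<mu> w = \<mu> * (Ln (- w) + \<i> * pi) - 1 / w"
definition bet :: "complex \<Rightarrow> real" where "bet \<mu> = 2 * pi * Im \<mu>"
definition gfun :: "complex \<Rightarrow> complex \<Rightarrow> real" where
  "gfun \<mu> w = (if Im w > 0 then Re (H1 \<mu> w) else if Im w < 0 then Phi (bet \<mu>) (Re (H1 \<mu> w))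
     else if Re w > 0 then Re (H1 \<mu> w) else Re (H2 \<mu> w))"

lemma H2_up: "Im w > 0 \<Longrightarrow> H2 \<mu> w = H1 \<mu> w"
proof -
  assume a: "Im w > 0"
  then have "w \<noteq> 0" by auto
  then have "Ln (- w) = Ln w - \<i> * pi" using a by (simp add: Ln_minus)
  then show ?thesis by (simp add: H1_def H2_def)
qed

lemma H2_low: "Im w < 0 \<Longrightarrow> Re (H2 \<mu> w) = Re (H1 \<mu> w) - bet \<mu>"
proof -
  assume a: "Im w < 0"
  then have "w \<noteq> 0" by auto
  then have "Ln (- w) = Ln w + \<i> * pi" using a by (simp add: Ln_minus)
  then show ?thesis by (simp add: H1_def H2_def bet_def algebra_simps)
qed

lemma H1_deriv: "w \<notin> \<real>\<^sub>\<le>\<^sub>0 \<Longrightarrow> (H1 \<mu> has_field_derivative (\<mu> / w + 1 / w ^ 2)) (at w)"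
proof -
  assume a: "w \<notin> \<real>\<^sub>\<le>\<^sub>0"
  then have w: "w \<noteq> 0" by auto
  have "((\<lambda>w. \<mu> * Ln w - 1 / w) has_field_derivative (\<mu> * inverse w - (- (1 / w ^ 2)))) (at w)"
    using w a by (auto intro!: derivative_eq_intros has_field_derivative_Ln[OF a] simp: power2_eq_square field_simps)
  then show ?thesis using w by (simp add: H1_def[abs_def] field_simps)
qed

lemma H2_deriv: "- w \<notin> \<real>\<^sub>\<le>\<^sub>0 \<Longrightarrow> (H2 \<mu> has_field_derivative (\<mu> / w + 1 / w ^ 2)) (at w)"
proof -
  assume a: "- w \<notin> \<real>\<^sub>\<le>\<^sub>0"
  then have w: "w \<noteq> 0" by auto
  have "((\<lambda>w. \<mu> * (Ln (- w) + \<i> * pi) - 1 / w) has_field_derivative (\<mu> * (inverse (- w) * (- 1) + 0) - (- (1 / w ^ 2)))) (at w)"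
  proof -
    have d: "((\<lambda>x. - x) has_field_derivative -1) (at w)" by (auto intro!: derivative_eq_intros)
    have "((\<lambda>x. Ln (- x)) has_field_derivative inverse (- w) * (- 1)) (at w)"
      using DERIV_chain2[where f=Ln and g="\<lambda>x. - x" and x=w, OF has_field_derivative_Ln[OF a] d] by simp
    then have l: "((\<lambda>x. Ln (- x)) has_field_derivative 1 / w) (at w)" using w by (simp add: field_simps)
    have i: "((\<lambda>x. 1 / x) has_field_derivative - (1 / w ^ 2)) (at w)"
      using w by (auto intro!: derivative_eq_intros simp: power2_eq_square field_simps)
    have "((\<lambda>x. \<mu> * (Ln (- x) + \<i> * pi) - 1 / x) has_field_derivative \<mu> * (1 / w + 0) - (- (1 / w ^ 2))) (at w)"
      by (intro DERIV_diff DERIV_cmult DERIV_add l i DERIV_const)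
    then show ?thesis using w by (simp add: field_simps)
  qed
  then show ?thesis using w by (simp add: H2_def[abs_def] field_simps)
qed

lemma H1_holo: assumes a: "(\<And>w. w \<in> U \<Longrightarrow> w \<notin> \<real>\<^sub>\<le>\<^sub>0)" shows "H1 \<mu> holomorphic_on U"
  unfolding H1_def[abs_def]
  by (intro holomorphic_intros) (use a a[of 0] in \<open>auto simp: complex_nonpos_Reals_iff\<close>)

lemma H2_holo: assumes a: "(\<And>w. w \<in> U \<Longrightarrow> - w \<notin> \<real>\<^sub>\<le>\<^sub>0)" shows "H2 \<mu> holomorphic_on U"
  unfolding H2_def[abs_def]
  by (intro holomorphic_intros) (use a a[of 0] in \<open>auto simp: complex_nonpos_Reals_iff\<close>)

lemma Re_H1_real: "0 < u \<Longrightarrow> Re (H1 \<mu> (of_real u)) = Re \<mu> * ln u - 1 / u"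
  by (simp add: H1_def Ln_of_real)

lemma Re_H2_real: "u < 0 \<Longrightarrow> Re (H2 \<mu> (of_real u)) = Re \<mu> * ln (- u) - pi * Im \<mu> - 1 / u"
proof -
  assume u: "u < 0"
  have "Ln (- complex_of_real u) = of_real (ln (- u))"
    using Ln_of_real[of "- u"] u by simp
  then show ?thesis by (simp add: H2_def)
qed

lemma g_locrep:
  assumes P1: "\<And>u. 0 < u \<Longrightarrow> u < R0 \<Longrightarrow> Re \<mu> * ln u - 1 / u < - Mb (bet \<mu>)"
      and P2: "\<And>u. 0 < u \<Longrightarrow> u < R0 \<Longrightarrow> Re \<mu> * ln u + pi * Im \<mu> + 1 / u > Mb (bet \<mu>)"
      and w0: "w0 \<noteq> 0" "cmod w0 < R0"
  shows "\<exists>U K j. open U \<and> w0 \<in> U \<and> K holomorphic_on U \<and> deriv K w0 = \<mu> / w0 + 1 / w0 ^ 2 \<and>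
           (\<forall>z\<in>U. gfun \<mu> z = pc (bet \<mu>) j K z)"
proof -
  let ?M = "Mb (bet \<mu>)"
  consider "Im w0 > 0" | "Im w0 < 0" | "Im w0 = 0" "Re w0 > 0" | "Im w0 = 0" "Re w0 < 0"
    using w0(1) complex_eqI[of w0 0] by force
  then show ?thesis
  proof cases
    case 1
    let ?U = "{w. Im w > 0}"
    have h: "H1 \<mu> holomorphic_on ?U" by (rule H1_holo) (auto simp: complex_nonpos_Reals_iff)
    have d: "deriv (H1 \<mu>) w0 = \<mu> / w0 + 1 / w0 ^ 2"
      by (rule DERIV_imp_deriv, rule H1_deriv) (use 1 in \<open>auto simp: complex_nonpos_Reals_iff\<close>)
    show ?thesis
      by (rule exI[of _ ?U], rule exI[of _ "H1 \<mu>"], rule exI[of _ False])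
         (use 1 h d open_halfspace_Im_gt in \<open>auto simp: gfun_def pc_def\<close>)
  next
    case 2
    let ?U = "{w. Im w < 0}"
    have h: "H1 \<mu> holomorphic_on ?U" by (rule H1_holo) (auto simp: complex_nonpos_Reals_iff)
    have d: "deriv (H1 \<mu>) w0 = \<mu> / w0 + 1 / w0 ^ 2"
      by (rule DERIV_imp_deriv, rule H1_deriv) (use 2 in \<open>auto simp: complex_nonpos_Reals_iff\<close>)
    show ?thesis
      by (rule exI[of _ ?U], rule exI[of _ "H1 \<mu>"], rule exI[of _ True])
         (use 2 h d open_halfspace_Im_lt in \<open>auto simp: gfun_def pc_def\<close>)
  next
    case 3
    let ?S = "{w. Re w > 0}"
    let ?U = "?S \<inter> (\<lambda>w. Re (H1 \<mu> w)) -` {..< - ?M}"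
    have h: "H1 \<mu> holomorphic_on ?S" by (rule H1_holo) (auto simp: complex_nonpos_Reals_iff)
    have "continuous_on ?S (\<lambda>w. Re (H1 \<mu> w))"
      by (intro continuous_intros holomorphic_on_imp_continuous_on h)
    then have o: "open ?U"
      by (rule continuous_open_preimage) (auto intro: open_halfspace_Re_gt)
    have w0r: "w0 = of_real (Re w0)" using 3 by (simp add: complex_eq_iff)
    have "cmod w0 = Re w0" using 3 by (subst w0r) simp
    then have "Re (H1 \<mu> w0) < - ?M"
      using P1[of "Re w0"] w0 3 Re_H1_real[of "Re w0" \<mu>] w0r by simp
    then have inU: "w0 \<in> ?U" using 3 by simp
    have d: "deriv (H1 \<mu>) w0 = \<mu> / w0 + 1 / w0 ^ 2"
      by (rule DERIV_imp_deriv, rule H1_deriv) (use 3 in \<open>auto simp: complex_nonpos_Reals_iff\<close>)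
    have eq: "gfun \<mu> z = pc (bet \<mu>) False (H1 \<mu>) z" if "z \<in> ?U" for z
      using that Phi_low[of "Re (H1 \<mu> z)" "bet \<mu>"] by (auto simp: gfun_def pc_def)
    show ?thesis
      by (rule exI[of _ ?U], rule exI[of _ "H1 \<mu>"], rule exI[of _ False])
         (use o inU d eq holomorphic_on_subset[OF h] in auto)
  next
    case 4
    let ?S = "{w. Re w < 0}"
    let ?U = "?S \<inter> (\<lambda>w. Re (H2 \<mu> w)) -` {?M - bet \<mu> <..}"
    have h: "H2 \<mu> holomorphic_on ?S" by (rule H2_holo) (auto simp: complex_nonpos_Reals_iff)
    have "continuous_on ?S (\<lambda>w. Re (H2 \<mu> w))"
      by (intro continuous_intros holomorphic_on_imp_continuous_on h)
    then have o: "open ?U"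
      by (rule continuous_open_preimage) (auto intro: open_halfspace_Re_lt)
    have w0r: "w0 = of_real (Re w0)" using 4 by (simp add: complex_eq_iff)
    have "cmod w0 = - Re w0" using 4 by (subst w0r) simp
    then have "Re (H2 \<mu> w0) > ?M - bet \<mu>"
      using P2[of "- Re w0"] w0 4 Re_H2_real[of "Re w0" \<mu>] w0r by (simp add: bet_def)
    then have inU: "w0 \<in> ?U" using 4 by simp
    have d: "deriv (H2 \<mu>) w0 = \<mu> / w0 + 1 / w0 ^ 2"
      by (rule DERIV_imp_deriv, rule H2_deriv) (use 4 in \<open>auto simp: complex_nonpos_Reals_iff\<close>)
    have eq: "gfun \<mu> z = pc (bet \<mu>) False (H2 \<mu>) z" if z: "z \<in> ?U" for z
    proof -
      have "Re z < 0" "Re (H2 \<mu> z) > ?M - bet \<mu>" using z by auto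
      consider "Im z > 0" | "Im z < 0" | "Im z = 0" by linarith
      then show ?thesis
      proof cases
        case 1 then show ?thesis by (simp add: gfun_def pc_def H2_up)
      next
        case 2
        then have e: "Re (H2 \<mu> z) = Re (H1 \<mu> z) - bet \<mu>" by (rule H2_low)
        then have "?M \<le> Re (H1 \<mu> z)" using \<open>Re (H2 \<mu> z) > ?M - bet \<mu>\<close> by simp
        then show ?thesis using 2 e Phi_high[of "bet \<mu>" "Re (H1 \<mu> z)"] by (simp add: gfun_def pc_def)
      next
        case 3 then show ?thesis using \<open>Re z < 0\<close> by (simp add: gfun_def pc_def)
      qed
    qed
    show ?thesis
      by (rule exI[of _ ?U], rule exI[of _ "H2 \<mu>"], rule exI[of _ False])
         (use o inU d eq holomorphic_on_subset[OF h] in auto)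
  qed
qed




lemma deriv_nz:
  assumes "w \<noteq> 0" "cmod w * cmod \<mu> < 1"
  shows "\<mu> / w + 1 / w ^ 2 \<noteq> 0"
proof
  assume "\<mu> / w + 1 / w ^ 2 = 0"
  then have "\<mu> * w + 1 = 0" using assms(1) by (simp add: field_simps power2_eq_square)
  then have "cmod (\<mu> * w) = 1" by (metis add_eq_0_iff norm_minus_cancel norm_one)
  then show False using assms(2) by (simp add: norm_mult mult.commute)
qed

lemma alg_id:
  fixes y \<mu> :: complex
  assumes "y \<noteq> 0" "q > 0" "N = q * k" "N \<ge> 1"
  shows "(\<mu> / y ^ N + 1 / (y ^ N) ^ 2) * (of_nat N * y ^ (N - 1)) =
         of_real (real N / real q) * (\<mu> * of_nat q / y + of_nat q / y ^ (q * k + 1))"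
proof -
  obtain m where m: "N = Suc m" using assms(4) by (cases N) auto
  have "(\<mu> / y ^ N + 1 / (y ^ N) ^ 2) * (of_nat N * y ^ (N - 1)) = of_nat N * (\<mu> / y + 1 / y ^ (N + 1))"
    using assms(1) unfolding m by (simp add: field_simps power2_eq_square)
  also have "\<dots> = of_real (real N / real q) * (\<mu> * of_nat q / y + of_nat q / y ^ (q * k + 1))"
    using assms(1,2,3) by (simp add: field_simps)
  finally show ?thesis .
qed

lemma f_locrep:
  assumes P1: "\<And>u. 0 < u \<Longrightarrow> u < R0 \<Longrightarrow> Re \<mu> * ln u - 1 / u < - Mb (bet \<mu>)"
      and P2: "\<And>u. 0 < u \<Longrightarrow> u < R0 \<Longrightarrow> Re \<mu> * ln u + pi * Im \<mu> + 1 / u > Mb (bet \<mu>)"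
      and P3: "R0 * cmod \<mu> < 1" and R1: "R0 \<le> 1"
      and y: "y \<noteq> 0" "cmod y < R0" and q: "q > 0" "k \<ge> 1"
  shows "\<exists>U K j. open U \<and> y \<in> U \<and> K holomorphic_on U \<and> deriv K y \<noteq> 0 \<and>
           deriv K y = of_real (real (q * k) / real q) * (\<mu> * of_nat q / y + of_nat q / y ^ (q * k + 1)) \<and>
           (\<forall>z\<in>U. gfun \<mu> (z ^ (q * k)) = pc (bet \<mu>) j K z)"
proof -
  define N where "N = q * k"
  have N1: "N \<ge> 1" using q by (simp add: N_def)
  have "cmod y < 1" using y R1 by simp
  have "cmod y ^ N \<le> cmod y ^ 1"
    by (rule power_decreasing) (use N1 \<open>cmod y < 1\<close> in auto)
  then have "cmod (y ^ N) \<le> cmod y" by (simp add: norm_power)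
  then have w0: "y ^ N \<noteq> 0" "cmod (y ^ N) < R0" using y by auto
  obtain U K j where U: "open U" "y ^ N \<in> U" "K holomorphic_on U" "deriv K (y ^ N) = \<mu> / y ^ N + 1 / (y ^ N) ^ 2"
      "\<forall>z\<in>U. gfun \<mu> z = pc (bet \<mu>) j K z"
    using g_locrep[OF P1 P2 w0] by blast
  define V where "V = UNIV \<inter> (\<lambda>y. y ^ N) -` U"
  have o: "open V" unfolding V_def by (rule continuous_open_preimage) (auto intro: continuous_intros U(1))
  have yV: "y \<in> V" using U(2) by (simp add: V_def)
  have "(K \<circ> (\<lambda>z. z ^ N)) holomorphic_on V"
    by (rule holomorphic_on_compose_gen[OF _ U(3)]) (auto simp: V_def intro!: holomorphic_intros)
  then have h: "(\<lambda>z. K (z ^ N)) holomorphic_on V" by (simp add: o_def)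
  have dK: "K field_differentiable at (y ^ N)" by (rule holomorphic_on_imp_differentiable_at[OF U(3,1,2)])
  have dp: "((\<lambda>z. z ^ N) has_field_derivative of_nat N * y ^ (N - 1)) (at y)"
    using DERIV_power[OF DERIV_ident, of N y UNIV] by simp
  have dp': "(\<lambda>z. z ^ N) field_differentiable at y" using dp by (auto simp: field_differentiable_def)
  have "deriv (K \<circ> (\<lambda>z. z ^ N)) y = deriv K (y ^ N) * deriv (\<lambda>z. z ^ N) y"
    by (rule deriv_chain[OF dp' dK])
  then have dd: "deriv (\<lambda>z. K (z ^ N)) y = (\<mu> / y ^ N + 1 / (y ^ N) ^ 2) * (of_nat N * y ^ (N - 1))"
    by (simp only: o_def DERIV_imp_deriv[OF dp] U(4))
  have "cmod (y ^ N) * cmod \<mu> \<le> R0 * cmod \<mu>"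
    using w0(2) by (intro mult_right_mono) auto
  then have "cmod (y ^ N) * cmod \<mu> < 1" using P3 by linarith
  then have "\<mu> / y ^ N + 1 / (y ^ N) ^ 2 \<noteq> 0" using deriv_nz w0(1) by blast
  then have nz: "deriv (\<lambda>z. K (z ^ N)) y \<noteq> 0" unfolding dd using y N1 by simp
  have eqs: "\<forall>z\<in>V. gfun \<mu> (z ^ (q * k)) = pc (bet \<mu>) j (\<lambda>z. K (z ^ N)) z"
    using U(5) by (simp add: V_def N_def pc_def)
  have dd2: "deriv (\<lambda>z. K (z ^ N)) y = of_real (real (q * k) / real q) * (\<mu> * of_nat q / y + of_nat q / y ^ (q * k + 1))"
    unfolding N_def[symmetric] dd by (rule alg_id[OF y(1) q(1) N_def N1, folded N_def])
  show ?thesis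
    by (rule exI[of _ V], rule exI[of _ "\<lambda>z. K (z ^ N)"], rule exI[of _ j])
       (intro conjI o yV h nz dd2 eqs)
qed


theorem lemma4p7:
  fixes p q k :: nat and \<mu> :: complex
  assumes "p > 0" and "q > 0" and "coprime p q" and "k \<ge> 1"
  shows "\<exists>r0>0. \<forall>r. 0 < r \<and> r < r0 \<longrightarrow>
           (\<exists>f g :: complex \<Rightarrow> real.
              submersion_on (ball 0 r - {0}) f \<and>
              first_integral (omega1 \<mu> q k) (ball 0 r - {0}) f \<and>
              submersion_on (ball 0 (r ^ (q * k)) - {0}) g \<and>
              (\<forall>y\<in>ball 0 r - {0}. f y = g (y ^ (q * k))))"
proof -
  define M where "M = Mb (bet \<mu>)"
  have ev1: "eventually (\<lambda>s::real. - Re \<mu> * ln s - s < - M) at_top" by real_asymp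
  have ev2: "eventually (\<lambda>s::real. - Re \<mu> * ln s + pi * Im \<mu> + s > M) at_top" by real_asymp
  obtain S0 where S0: "\<And>s. s \<ge> S0 \<Longrightarrow> - Re \<mu> * ln s - s < - M \<and> - Re \<mu> * ln s + pi * Im \<mu> + s > M"
    using eventually_conj[OF ev1 ev2] by (auto simp: eventually_at_top_linorder)
  define D where "D = max S0 1 + cmod \<mu> + 1"
  have D: "D \<ge> 2" "D > cmod \<mu>" "D \<ge> S0"
    unfolding D_def using norm_ge_zero[of \<mu>] max.cobounded1[of S0 1] max.cobounded2[of S0 1] by linarith+
  define R0 where "R0 = 1 / D"
  have R0pos: "R0 > 0" and R1: "R0 \<le> 1" using D by (auto simp: R0_def)
  have P3: "R0 * cmod \<mu> < 1" using D by (simp add: R0_def field_simps)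
  have big: "1 / u \<ge> S0" if "0 < u" "u < R0" for u
  proof -
    have "1 / R0 < 1 / u" using that by (simp add: frac_less2)
    then show ?thesis using D by (simp add: R0_def)
  qed
  have lnu: "ln u = - ln (1 / u)" if "0 < u" for u :: real using that by (simp add: ln_div)
  have P1: "Re \<mu> * ln u - 1 / u < - Mb (bet \<mu>)" if "0 < u" "u < R0" for u
    using S0[OF big[OF that]] lnu[OF that(1)] by (simp add: M_def)
  have P2: "Re \<mu> * ln u + pi * Im \<mu> + 1 / u > Mb (bet \<mu>)" if "0 < u" "u < R0" for u
    using S0[OF big[OF that]] lnu[OF that(1)] by (simp add: M_def)
  show ?thesis
  proof (intro exI[of _ R0] conjI allI impI)
    show "R0 > 0" by (rule R0pos)
    fix r :: real assume r: "0 < r \<and> r < R0"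
    have fl: "\<exists>U K j. open U \<and> y \<in> U \<and> K holomorphic_on U \<and> deriv K y \<noteq> 0 \<and>
           deriv K y = of_real (real (q * k) / real q) * (\<mu> * of_nat q / y + of_nat q / y ^ (q * k + 1)) \<and>
           (\<forall>z\<in>U. gfun \<mu> (z ^ (q * k)) = pc (bet \<mu>) j K z)" if "y \<in> ball 0 r - {0}" for y
      by (rule f_locrep[OF P1 P2 P3 R1]) (use that r assms in auto)
    have sub_f: "submersion_on (ball 0 r - {0}) (\<lambda>y. gfun \<mu> (y ^ (q * k)))"
    proof (rule locrep_submersion)
      fix x :: complex assume "x \<in> ball 0 r - {0}"
      from fl[OF this] obtain U K j where U: "open U" "x \<in> U" "K holomorphic_on U" "deriv K x \<noteq> 0"
        "\<forall>z\<in>U. gfun \<mu> (z ^ (q * k)) = pc (bet \<mu>) j K z"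
        by (elim exE conjE)
      show "\<exists>U K j. open U \<and> x \<in> U \<and> K holomorphic_on U \<and> deriv K x \<noteq> 0 \<and>
          (\<forall>z\<in>U. gfun \<mu> (z ^ (q * k)) = pc (bet \<mu>) j K z)"
        by (intro exI conjI) (rule U(1), rule U(2), rule U(3), rule U(4), rule U(5))
    qed
    have fi_f: "first_integral (omega1 \<mu> q k) (ball 0 r - {0}) (\<lambda>y. gfun \<mu> (y ^ (q * k)))"
    proof (rule locrep_first_integral)
      fix x :: complex assume "x \<in> ball 0 r - {0}"
      from fl[OF this] obtain U K j where U: "open U" "x \<in> U" "K holomorphic_on U"
        "deriv K x = of_real (real (q * k) / real q) * (\<mu> * of_nat q / x + of_nat q / x ^ (q * k + 1))"
        "\<forall>z\<in>U. gfun \<mu> (z ^ (q * k)) = pc (bet \<mu>) j K z"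
        by (elim exE conjE)
      show "\<exists>U K j c. open U \<and> x \<in> U \<and> K holomorphic_on U \<and>
          deriv K x = of_real c * (\<mu> * of_nat q / x + of_nat q / x ^ (q * k + 1)) \<and>
          (\<forall>z\<in>U. gfun \<mu> (z ^ (q * k)) = pc (bet \<mu>) j K z)"
        by (intro exI conjI) (rule U(1), rule U(2), rule U(3), rule U(4), rule U(5))
    qed
    have rN: "r ^ (q * k) \<le> r"
    proof -
      have "r ^ (q * k) \<le> r ^ 1"
        by (rule power_decreasing) (use r R1 assms in auto)
      then show ?thesis by simp
    qed
    have gl: "\<exists>U K j. open U \<and> x \<in> U \<and> K holomorphic_on U \<and> deriv K x \<noteq> 0 \<and> (\<forall>z\<in>U. gfun \<mu> z = pc (bet \<mu>) j K z)"
      if x: "x \<in> ball 0 (r ^ (q * k)) - {0}" for x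
    proof -
      have x0: "x \<noteq> 0" "cmod x < R0" using x rN r by auto
      obtain U K j where U: "open U" "x \<in> U" "K holomorphic_on U" "deriv K x = \<mu> / x + 1 / x ^ 2"
          "\<forall>z\<in>U. gfun \<mu> z = pc (bet \<mu>) j K z"
        using g_locrep[OF P1 P2 x0] by blast
      have "cmod x * cmod \<mu> \<le> R0 * cmod \<mu>" using x0 by (intro mult_right_mono) auto
      then have "cmod x * cmod \<mu> < 1" using P3 by linarith
      then have "deriv K x \<noteq> 0" using deriv_nz[OF x0(1)] U(4) by simp
      then show ?thesis using U(1,2,3,5) by (intro exI conjI)
    qed
    have sub_g: "submersion_on (ball 0 (r ^ (q * k)) - {0}) (gfun \<mu>)"
      by (rule locrep_submersion[OF gl])
    show "\<exists>f g :: complex \<Rightarrow> real.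
              submersion_on (ball 0 r - {0}) f \<and>
              first_integral (omega1 \<mu> q k) (ball 0 r - {0}) f \<and>
              submersion_on (ball 0 (r ^ (q * k)) - {0}) g \<and>
              (\<forall>y\<in>ball 0 r - {0}. f y = g (y ^ (q * k)))"
      by (intro exI[of _ "\<lambda>y. gfun \<mu> (y ^ (q * k))"] exI[of _ "gfun \<mu>"] conjI sub_f fi_f sub_g) simp
  qed
qed

end
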